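(* Let $M_1=\begin{bmatrix} A_1 & B_1\\ 0 & C_1\end{bmatrix}$ and $M_2=\begin{bmatrix} A_2 & B_2\\ 0 & C_2\end{bmatrix}$ be two $m\times n$ ACI-matrices over a field $\mathbb{F}$, where $A_1$ and $A_2$ have the same number $n_1$ of columns. Suppose there are a nonsingular constant matrix $R$ of order $m$ and permutation matrices $Q$ of order $n_1$ and $Q'$ of order $n-n_1$ such that $$\begin{bmatrix} A_2 & B_2\\ 0 & C_2\end{bmatrix}=R\begin{bmatrix} A_1 & B_1\\ 0 & C_1\end{bmatrix}\begin{bmatrix} Q & 0\\ 0 & Q'\end{bmatrix}.$$ If $A_1$ and $A_2$ both have linearly independent rows, then $A_1\sim A_2$ and $C_1\sim C_2$.
   Context: Let $\mathbb{F}$ be a field. An ACI-matrix is a matrix with entries in $\mathbb{F}[x_1,\dots,x_k]$ whose entries are polynomials of degree at most one and such that no indeterminate appears in two different columns. Two ACI-matrices satisfy $N\sim N'$ (equivalent) if $N'=RNQ$ for some nonsingular constant matrix $R$ over $\mathbb{F}$ and some permutation matrix $Q$. Blocks may be degenerate (zero rows or zero columns). Linear independence of rows is over $\mathbb{F}$: if a column involves indeterminates $y_1,\dots,y_t$, its entries lie in the $\mathbb{F}$-vector space $\mathbb{F}+\mathbb{F}y_1+\dots+\mathbb{F}y_t$, and rows are vectors in the product of these spaces over all columns. *)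

theory Defs
  imports "Jordan_Normal_Form.Matrix" "HOL-Combinatorics.Permutations"
begin

text \<open>An ACI-matrix with entries in F[x_1,...,x_k] of degree at most one is represented by
its coefficient matrices: N 0 is the constant part, N s (1 \<le> s \<le> k) is the coefficient
matrix of x_s, so that the matrix is N 0 + x_1 N 1 + ... + x_k N k.  Values N s for s > k
are irrelevant.\<close>

definition aci_mat :: "nat \<Rightarrow> nat \<Rightarrow> nat \<Rightarrow> (nat \<Rightarrow> 'a::field mat) \<Rightarrow> bool" where
  "aci_mat k m n N \<longleftrightarrow>
     (\<forall>s\<le>k. N s \<in> carrier_mat m n) \<and>
     (\<forall>s\<in>{1..k}. \<forall>j1<n. \<forall>j2<n.
        (\<exists>i<m. N s $$ (i, j1) \<noteq> 0) \<and> (\<exists>i<m. N s $$ (i, j2) \<noteq> 0) \<longrightarrow> j1 = j2)"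

definition is_perm_mat :: "nat \<Rightarrow> 'a::field mat \<Rightarrow> bool" where
  "is_perm_mat n P \<longleftrightarrow>
     (\<exists>p. p permutes {..<n} \<and> P = mat n n (\<lambda>(i, j). if p i = j then 1 else 0))"

text \<open>Rows of an r-row ACI-matrix are linearly independent over F: the only constant
combination of rows that vanishes (as a vector of polynomials) is the trivial one.\<close>
definition aci_rows_indep :: "nat \<Rightarrow> nat \<Rightarrow> (nat \<Rightarrow> 'a::field mat) \<Rightarrow> bool" where
  "aci_rows_indep k r N \<longleftrightarrow>
     (\<forall>v \<in> carrier_vec r. (\<forall>s\<le>k. transpose_mat (N s) *\<^sub>v v = 0\<^sub>v (dim_col (N s))) \<longrightarrow> v = 0\<^sub>v r)"

definition aci_equiv :: "nat \<Rightarrow> nat \<Rightarrow> nat \<Rightarrow> (nat \<Rightarrow> 'a::field mat) \<Rightarrow> nat \<Rightarrow> nat \<Rightarrow> (nat \<Rightarrow> 'a mat) \<Rightarrow> bool" where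
  "aci_equiv k r c N r' c' N' \<longleftrightarrow> r = r' \<and> c = c' \<and>
     (\<exists>R P. R \<in> carrier_mat r r \<and> invertible_mat R \<and> is_perm_mat c P \<and>
        (\<forall>s\<le>k. N' s = R * N s * P))"

end

theory Submission
  imports Defs "Jordan_Normal_Form.Determinant"
begin



lemma block_prod:
  fixes R11 :: "'a::field mat"
  assumes "R11 \<in> carrier_mat r1 c1" "R12 \<in> carrier_mat r1 c2" "R21 \<in> carrier_mat r2 c1"
    "R22 \<in> carrier_mat r2 c2" "A \<in> carrier_mat c1 n1" "B \<in> carrier_mat c1 n2"
    "C \<in> carrier_mat c2 n2" "Q \<in> carrier_mat n1 n1" "Q' \<in> carrier_mat n2 n2"
  shows "four_block_mat R11 R12 R21 R22 * four_block_mat A B (0\<^sub>m c2 n1) C *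
     four_block_mat Q (0\<^sub>m n1 n2) (0\<^sub>m n2 n1) Q' =
     four_block_mat (R11 * A * Q) ((R11 * B + R12 * C) * Q') (R21 * A * Q) ((R21 * B + R22 * C) * Q')"
proof -
  have 1: "four_block_mat R11 R12 R21 R22 * four_block_mat A B (0\<^sub>m c2 n1) C =
    four_block_mat (R11 * A) (R11 * B + R12 * C) (R21 * A) (R21 * B + R22 * C)"
    using assms by (subst mult_four_block_mat[of _ r1 c1 _ c2 _ r2 _ _ n1 _ n2]) auto
  show ?thesis unfolding 1 using assms
    by (subst mult_four_block_mat[of _ r1 n1 _ n2 _ r2 _ _ n1 _ n2]) auto
qed

lemma four_block_eq:
  assumes "X1 \<in> carrier_mat a b" "X2 \<in> carrier_mat a d" "X3 \<in> carrier_mat c b" "X4 \<in> carrier_mat c d"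
    "Y1 \<in> carrier_mat a b" "Y2 \<in> carrier_mat a d" "Y3 \<in> carrier_mat c b" "Y4 \<in> carrier_mat c d"
    and eq: "four_block_mat X1 X2 X3 X4 = four_block_mat Y1 Y2 Y3 Y4"
  shows "X1 = Y1 \<and> X2 = Y2 \<and> X3 = Y3 \<and> X4 = Y4"
proof -
  have e: "\<And>i j. i < a + c \<Longrightarrow> j < b + d \<Longrightarrow>
     four_block_mat X1 X2 X3 X4 $$ (i,j) = four_block_mat Y1 Y2 Y3 Y4 $$ (i,j)" using eq by simp
  have "X1 = Y1"
  proof (rule eq_matI)
    fix i j assume "i < dim_row Y1" "j < dim_col Y1"
    thus "X1 $$ (i,j) = Y1 $$ (i,j)" using e[of i j] assms(1-8) by auto
  qed (use assms in auto)
  moreover have "X2 = Y2"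
  proof (rule eq_matI)
    fix i j assume "i < dim_row Y2" "j < dim_col Y2"
    thus "X2 $$ (i,j) = Y2 $$ (i,j)" using e[of i "j+b"] assms(1-8) by auto
  qed (use assms in auto)
  moreover have "X3 = Y3"
  proof (rule eq_matI)
    fix i j assume "i < dim_row Y3" "j < dim_col Y3"
    thus "X3 $$ (i,j) = Y3 $$ (i,j)" using e[of "i+a" j] assms(1-8) by auto
  qed (use assms in auto)
  moreover have "X4 = Y4"
  proof (rule eq_matI)
    fix i j assume "i < dim_row Y4" "j < dim_col Y4"
    thus "X4 $$ (i,j) = Y4 $$ (i,j)" using e[of "i+a" "j+b"] assms(1-8) by auto
  qed (use assms in auto)
  ultimately show ?thesis by blast
qed

lemma perm_mat_inv:
  assumes "is_perm_mat n (Q :: 'a::field mat)"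
  shows "Q \<in> carrier_mat n n \<and> Q * transpose_mat Q = 1\<^sub>m n"
proof -
  obtain p where p: "p permutes {..<n}" and Q: "Q = mat n n (\<lambda>(i, j). if p i = j then 1 else 0)"
    using assms unfolding is_perm_mat_def by blast
  have QQ: "Q * transpose_mat Q = 1\<^sub>m n"
  proof (rule eq_matI)
    fix i j assume i: "i < dim_row (1\<^sub>m n :: 'a mat)" and j: "j < dim_col (1\<^sub>m n :: 'a mat)"
    hence i': "i < n" and j': "j < n" by auto
    have pi: "p i < n" using p i' by (meson lessThan_iff permutes_in_image)
    have inj: "p i = p j \<longleftrightarrow> i = j" using p by (metis permutes_inj injD)
    have "(Q * transpose_mat Q) $$ (i,j) = (\<Sum>l\<in>{0..<n}. (if p i = l then 1 else 0) * (if p j = l then (1::'a) else 0))"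
      using i' j' unfolding Q by (simp add: scalar_prod_def)
    also have "\<dots> = (\<Sum>l\<in>{0..<n}. if l = p i then (if p j = p i then 1 else 0) else 0)"
      by (rule sum.cong) auto
    also have "\<dots> = (if p j = p i then 1 else 0)" using pi by (simp add: sum.delta')
    also have "\<dots> = 1\<^sub>m n $$ (i,j)" using inj i' j' by auto
    finally show "(Q * transpose_mat Q) $$ (i,j) = 1\<^sub>m n $$ (i,j)" .
  qed (use Q in auto)
  thus ?thesis using Q by auto
qed



lemma pad_le:
  fixes A :: "'a::field mat"
  assumes A: "A \<in> carrier_mat a b" and B: "B \<in> carrier_mat b a" and AB: "A * B = 1\<^sub>m a"
  shows "a \<le> b"
proof (rule ccontr)
  assume "\<not> a \<le> b" hence ba: "b < a" by simp
  define A' where "A' = mat a a (\<lambda>(i,j). if j < b then A $$ (i,j) else 0)"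
  define B' where "B' = mat a a (\<lambda>(i,j). if i < b then B $$ (i,j) else 0)"
  have A'c: "A' \<in> carrier_mat a a" and B'c: "B' \<in> carrier_mat a a" unfolding A'_def B'_def by auto
  have "A' * B' = 1\<^sub>m a"
  proof (rule eq_matI)
    fix i j assume i: "i < dim_row (1\<^sub>m a :: 'a mat)" and j: "j < dim_col (1\<^sub>m a :: 'a mat)"
    hence i': "i < a" and j': "j < a" by auto
    have "(A' * B') $$ (i,j) = (\<Sum>l\<in>{0..<a}. A' $$ (i,l) * B' $$ (l,j))"
      using i' j' A'c B'c by (simp add: scalar_prod_def)
    also have "\<dots> = (\<Sum>l\<in>{0..<a}. (if l < b then A $$ (i,l) * B $$ (l,j) else 0))"
      by (rule sum.cong) (use i' j' in \<open>auto simp: A'_def B'_def\<close>)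
    also have "\<dots> = (\<Sum>l\<in>{0..<b}. A $$ (i,l) * B $$ (l,j))"
      by (rule sum.mono_neutral_cong_right) (use ba in auto)
    also have "\<dots> = (A * B) $$ (i,j)" using i' j' A B by (simp add: scalar_prod_def)
    finally show "(A' * B') $$ (i,j) = 1\<^sub>m a $$ (i,j)" unfolding AB .
  qed (use A'c B'c in auto)
  hence "B' * A' = 1\<^sub>m a"
    by (intro mat_mult_left_right_inverse[OF A'c B'c])
  hence "(B' * A') $$ (a - 1, a - 1) = 1" using ba by simp
  moreover have "(B' * A') $$ (a - 1, a - 1) = (\<Sum>l\<in>{0..<a}. B' $$ (a-1,l) * A' $$ (l,a-1))"
    using ba A'c B'c by (simp add: scalar_prod_def)
  moreover have "\<dots> = 0" by (rule sum.neutral) (use ba in \<open>auto simp: B'_def\<close>)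
  ultimately show False by simp
qed

lemma zero_block:
  fixes R :: "'a::field mat"
  assumes Rc: "R \<in> carrier_mat m m" and "m1 \<le> m" "m2 \<le> m" "n1 \<le> n"
    and d1: "\<forall>s\<le>k. A1 s \<in> carrier_mat m1 n1 \<and> B1 s \<in> carrier_mat m1 (n - n1) \<and>
                C1 s \<in> carrier_mat (m - m1) (n - n1)"
    and d2: "\<forall>s\<le>k. A2 s \<in> carrier_mat m2 n1 \<and> B2 s \<in> carrier_mat m2 (n - n1) \<and>
                C2 s \<in> carrier_mat (m - m2) (n - n1)"
    and eq: "\<forall>s\<le>k. R * four_block_mat (A1 s) (B1 s) (0\<^sub>m (m - m1) n1) (C1 s) *
            four_block_mat Q (0\<^sub>m n1 (n - n1)) (0\<^sub>m (n - n1) n1) Q'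
            = four_block_mat (A2 s) (B2 s) (0\<^sub>m (m - m2) n1) (C2 s)"
    and Qc: "Q \<in> carrier_mat n1 n1" and Q'c: "Q' \<in> carrier_mat (n - n1) (n - n1)"
    and Qic: "Qi \<in> carrier_mat n1 n1" and QQi: "Q * Qi = 1\<^sub>m n1"
    and ind: "aci_rows_indep k m1 A1"
    and sp: "split_block R m2 m1 = (R11, R12, R21, R22)"
  shows "R11 \<in> carrier_mat m2 m1 \<and> R12 \<in> carrier_mat m2 (m - m1) \<and> R22 \<in> carrier_mat (m - m2) (m - m1)
     \<and> R = four_block_mat R11 R12 (0\<^sub>m (m - m2) m1) R22
     \<and> (\<forall>s\<le>k. A2 s = R11 * A1 s * Q \<and> C2 s = R22 * C1 s * Q')"
proof -
  note sb = split_block[OF sp, of "m - m2" "m - m1"]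
  have dims: "dim_row R = m2 + (m - m2)" "dim_col R = m1 + (m - m1)" using Rc assms(2,3) by auto
  note sb = sb[OF dims]
  have blocks: "A2 s = R11 * A1 s * Q \<and> 0\<^sub>m (m - m2) n1 = R21 * A1 s * Q \<and>
      C2 s = (R21 * B1 s + R22 * C1 s) * Q'" if s: "s \<le> k" for s
  proof -
    have eqb: "four_block_mat (R11 * A1 s * Q) ((R11 * B1 s + R12 * C1 s) * Q') (R21 * A1 s * Q) ((R21 * B1 s + R22 * C1 s) * Q')
       = four_block_mat (A2 s) (B2 s) (0\<^sub>m (m - m2) n1) (C2 s)"
      using eq s sb(5) block_prod[OF sb(1-4), of "A1 s" n1 "B1 s" "n - n1" "C1 s" Q Q'] d1 Qc Q'c by auto
    have cs: "R11 * A1 s * Q \<in> carrier_mat m2 n1" "(R11 * B1 s + R12 * C1 s) * Q' \<in> carrier_mat m2 (n - n1)"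
      "R21 * A1 s * Q \<in> carrier_mat (m - m2) n1" "(R21 * B1 s + R22 * C1 s) * Q' \<in> carrier_mat (m - m2) (n - n1)"
      "A2 s \<in> carrier_mat m2 n1" "B2 s \<in> carrier_mat m2 (n - n1)"
      "0\<^sub>m (m - m2) n1 \<in> carrier_mat (m - m2) n1" "C2 s \<in> carrier_mat (m - m2) (n - n1)"
      using sb d1 d2 s Qc Q'c by auto
    show ?thesis using four_block_eq[OF cs eqb] by simp
  qed
  have R21A: "R21 * A1 s = 0\<^sub>m (m - m2) n1" if s: "s \<le> k" for s
  proof -
    have z: "R21 * A1 s * Q = 0\<^sub>m (m - m2) n1" using blocks[OF s] by simp
    have c: "R21 * A1 s \<in> carrier_mat (m - m2) n1" using sb d1 s by auto
    have "R21 * A1 s = R21 * A1 s * (Q * Qi)" using QQi c by (simp add: right_mult_one_mat)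
    also have "\<dots> = (R21 * A1 s * Q) * Qi" using c Qc Qic by (simp add: assoc_mult_mat)
    also have "\<dots> = 0\<^sub>m (m - m2) n1" using z Qic by simp
    finally show ?thesis .
  qed
  have R21: "R21 = 0\<^sub>m (m - m2) m1"
  proof (rule eq_matI)
    fix i j assume "i < dim_row (0\<^sub>m (m - m2) m1 :: 'a mat)" "j < dim_col (0\<^sub>m (m - m2) m1 :: 'a mat)"
    hence i: "i < m - m2" and j: "j < m1" by auto
    define v where "v = row R21 i"
    have vc: "v \<in> carrier_vec m1" using sb(3) unfolding v_def by auto
    have "\<forall>s\<le>k. transpose_mat (A1 s) *\<^sub>v v = 0\<^sub>v (dim_col (A1 s))"
    proof (intro allI impI)
      fix s assume s: "s \<le> k"
      have A: "A1 s \<in> carrier_mat m1 n1" using d1 s by auto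
      show "transpose_mat (A1 s) *\<^sub>v v = 0\<^sub>v (dim_col (A1 s))"
      proof (rule eq_vecI)
        fix l assume "l < dim_vec (0\<^sub>v (dim_col (A1 s)) :: 'a vec)"
        hence l: "l < n1" using A by auto
        have "(transpose_mat (A1 s) *\<^sub>v v) $ l = col (A1 s) l \<bullet> v" using l A by simp
        also have "\<dots> = v \<bullet> col (A1 s) l" using vc A by (intro comm_scalar_prod[of _ m1]) auto
        also have "\<dots> = (R21 * A1 s) $$ (i, l)" using i l sb(3) A unfolding v_def by simp
        also have "\<dots> = 0" using R21A[OF s] i l by simp
        finally show "(transpose_mat (A1 s) *\<^sub>v v) $ l = 0\<^sub>v (dim_col (A1 s)) $ l" using l A by simp
      qed (use A in auto)
    qed
    hence "v = 0\<^sub>v m1" using ind vc unfolding aci_rows_indep_def by blast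
    hence "v $ j = 0" using j by simp
    thus "R21 $$ (i, j) = 0\<^sub>m (m - m2) m1 $$ (i, j)" using i j sb(3) unfolding v_def by simp
  qed (use sb in auto)
  have "C2 s = R22 * C1 s * Q'" if s: "s \<le> k" for s
  proof -
    have "C2 s = (R21 * B1 s + R22 * C1 s) * Q'" using blocks[OF s] by simp
    also have "R21 * B1 s = 0\<^sub>m (m - m2) (n - n1)" using R21 d1 s by (metis left_mult_zero_mat)
    also have "0\<^sub>m (m - m2) (n - n1) + R22 * C1 s = R22 * C1 s" using d1 s sb by simp
    finally show ?thesis .
  qed
  thus ?thesis using blocks sb R21 by auto
qed

theorem lemma4p3:
  fixes k m n n1 m1 m2 :: nat
    and A1 B1 C1 A2 B2 C2 M1 M2 :: "nat \<Rightarrow> 'a::field mat"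
    and R Q Q' :: "'a mat"
  assumes "n1 \<le> n" and "m1 \<le> m" and "m2 \<le> m"
    and "\<forall>s\<le>k. A1 s \<in> carrier_mat m1 n1 \<and> B1 s \<in> carrier_mat m1 (n - n1) \<and>
                C1 s \<in> carrier_mat (m - m1) (n - n1)"
    and "\<forall>s\<le>k. A2 s \<in> carrier_mat m2 n1 \<and> B2 s \<in> carrier_mat m2 (n - n1) \<and>
                C2 s \<in> carrier_mat (m - m2) (n - n1)"
    and "\<forall>s\<le>k. M1 s = four_block_mat (A1 s) (B1 s) (0\<^sub>m (m - m1) n1) (C1 s)"
    and "\<forall>s\<le>k. M2 s = four_block_mat (A2 s) (B2 s) (0\<^sub>m (m - m2) n1) (C2 s)"
    and "aci_mat k m n M1" and "aci_mat k m n M2"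
    and "R \<in> carrier_mat m m" and "invertible_mat R"
    and "is_perm_mat n1 Q" and "is_perm_mat (n - n1) Q'"
    and "\<forall>s\<le>k. M2 s = R * M1 s *
            four_block_mat Q (0\<^sub>m n1 (n - n1)) (0\<^sub>m (n - n1) n1) Q'"
    and "aci_rows_indep k m1 A1" and "aci_rows_indep k m2 A2"
  shows "aci_equiv k m1 n1 A1 m2 n1 A2 \<and> aci_equiv k (m - m1) (n - n1) C1 (m - m2) (n - n1) C2"
proof -
  note nn = assms(1) and mm1 = assms(2) and mm2 = assms(3) and d1 = assms(4) and d2 = assms(5)
  note Rc = assms(10)
  define P where "P = four_block_mat Q (0\<^sub>m n1 (n - n1)) (0\<^sub>m (n - n1) n1) Q'"
  define Qi where "Qi = transpose_mat Q"
  define Qi' where "Qi' = transpose_mat Q'"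
  define Pi where "Pi = four_block_mat Qi (0\<^sub>m n1 (n - n1)) (0\<^sub>m (n - n1) n1) Qi'"
  have Qc: "Q \<in> carrier_mat n1 n1" and QQi: "Q * Qi = 1\<^sub>m n1"
    using perm_mat_inv[OF assms(12)] unfolding Qi_def by auto
  have Q'c: "Q' \<in> carrier_mat (n - n1) (n - n1)" and QQi': "Q' * Qi' = 1\<^sub>m (n - n1)"
    using perm_mat_inv[OF assms(13)] unfolding Qi'_def by auto
  have Qic: "Qi \<in> carrier_mat n1 n1" using Qc unfolding Qi_def by auto
  have Qi'c: "Qi' \<in> carrier_mat (n - n1) (n - n1)" using Q'c unfolding Qi'_def by auto
  have QiQ: "Qi * Q = 1\<^sub>m n1" by (rule mat_mult_left_right_inverse[OF Qc Qic QQi])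
  have Pc: "P \<in> carrier_mat n n" using Qc Q'c nn unfolding P_def
    by (metis four_block_carrier_mat le_add_diff_inverse)
  have Pic: "Pi \<in> carrier_mat n n" using Qic Qi'c nn unfolding Pi_def
    by (metis four_block_carrier_mat le_add_diff_inverse)
  have PPi: "P * Pi = 1\<^sub>m n"
  proof -
    have "P * Pi = four_block_mat (Q * Qi + 0\<^sub>m n1 (n - n1) * 0\<^sub>m (n - n1) n1)
       (Q * 0\<^sub>m n1 (n - n1) + 0\<^sub>m n1 (n - n1) * Qi')
       (0\<^sub>m (n - n1) n1 * Qi + Q' * 0\<^sub>m (n - n1) n1)
       (0\<^sub>m (n - n1) n1 * 0\<^sub>m n1 (n - n1) + Q' * Qi')"
      unfolding P_def Pi_def
      by (rule mult_four_block_mat[OF Qc _ _ Q'c Qic _ _ Qi'c]) auto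
    also have "\<dots> = four_block_mat (1\<^sub>m n1) (0\<^sub>m n1 (n - n1)) (0\<^sub>m (n - n1) n1) (1\<^sub>m (n - n1))"
      using QQi QQi' Qc Q'c Qic Qi'c by simp
    also have "\<dots> = 1\<^sub>m n" using nn by simp
    finally show ?thesis .
  qed
  obtain S where Sc: "S \<in> carrier_mat m m" and RS: "R * S = 1\<^sub>m m" and SR: "S * R = 1\<^sub>m m"
  proof -
    from assms(11) obtain B where "R * B = 1\<^sub>m (dim_row R)" "B * R = 1\<^sub>m (dim_row B)"
      unfolding invertible_mat_def inverts_mat_def by blast
    moreover have "dim_row B = m" "dim_col B = m"
      using Rc arg_cong[OF calculation(1), of dim_col] arg_cong[OF calculation(2), of dim_col] by auto
    ultimately show ?thesis using that Rc by auto
  qed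
  have M1c: "M1 s \<in> carrier_mat m n" if s: "s \<le> k" for s
  proof -
    have "four_block_mat (A1 s) (B1 s) (0\<^sub>m (m - m1) n1) (C1 s) \<in> carrier_mat (m1 + (m - m1)) (n1 + (n - n1))"
      using d1 s by (intro four_block_carrier_mat) auto
    thus ?thesis unfolding assms(6)[rule_format, OF s] using mm1 nn by simp
  qed
  have eq1: "\<forall>s\<le>k. R * four_block_mat (A1 s) (B1 s) (0\<^sub>m (m - m1) n1) (C1 s) *
            four_block_mat Q (0\<^sub>m n1 (n - n1)) (0\<^sub>m (n - n1) n1) Q'
            = four_block_mat (A2 s) (B2 s) (0\<^sub>m (m - m2) n1) (C2 s)"
  proof (intro allI impI)
    fix s assume s: "s \<le> k"
    have "R * M1 s * P = four_block_mat (A2 s) (B2 s) (0\<^sub>m (m - m2) n1) (C2 s)"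
      using assms(7)[rule_format, OF s] assms(14)[rule_format, OF s] unfolding P_def by simp
    thus "R * four_block_mat (A1 s) (B1 s) (0\<^sub>m (m - m1) n1) (C1 s) *
            four_block_mat Q (0\<^sub>m n1 (n - n1)) (0\<^sub>m (n - n1) n1) Q'
            = four_block_mat (A2 s) (B2 s) (0\<^sub>m (m - m2) n1) (C2 s)"
      unfolding assms(6)[rule_format, OF s] P_def .
  qed
  have eq2: "\<forall>s\<le>k. S * four_block_mat (A2 s) (B2 s) (0\<^sub>m (m - m2) n1) (C2 s) *
            four_block_mat Qi (0\<^sub>m n1 (n - n1)) (0\<^sub>m (n - n1) n1) Qi'
            = four_block_mat (A1 s) (B1 s) (0\<^sub>m (m - m1) n1) (C1 s)"
  proof (intro allI impI)
    fix s assume s: "s \<le> k"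
    have M: "M1 s \<in> carrier_mat m n" by (rule M1c[OF s])
    have "S * (R * M1 s * P) * Pi = ((S * R) * M1 s * P) * Pi"
      using Sc Rc M Pc by (simp add: assoc_mult_mat[of _ m m _ m] assoc_mult_mat[of _ m m _ n])
    also have "\<dots> = M1 s * (P * Pi)" using M Pc Pic SR by (simp add: assoc_mult_mat[of _ m n _ n])
    also have "\<dots> = M1 s" using PPi M by simp
    finally have fin: "S * (R * M1 s * P) * Pi = M1 s" .
    have e: "four_block_mat (A2 s) (B2 s) (0\<^sub>m (m - m2) n1) (C2 s) = R * M1 s * P"
      unfolding P_def by (rule trans[OF sym[OF assms(7)[rule_format, OF s]] assms(14)[rule_format, OF s]])
    have e6: "M1 s = four_block_mat (A1 s) (B1 s) (0\<^sub>m (m - m1) n1) (C1 s)" by (rule assms(6)[rule_format, OF s])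
    show "S * four_block_mat (A2 s) (B2 s) (0\<^sub>m (m - m2) n1) (C2 s) *
            four_block_mat Qi (0\<^sub>m n1 (n - n1)) (0\<^sub>m (n - n1) n1) Qi'
            = four_block_mat (A1 s) (B1 s) (0\<^sub>m (m - m1) n1) (C1 s)"
      unfolding e Pi_def[symmetric] e6[symmetric] by (rule fin)
  qed
  obtain R11 R12 R21 R22 where spR: "split_block R m2 m1 = (R11, R12, R21, R22)" by (metis prod_cases4)
  obtain S11 S12 S21 S22 where spS: "split_block S m1 m2 = (S11, S12, S21, S22)" by (metis prod_cases4)
  note zR = zero_block[OF Rc mm1 mm2 nn d1 d2 eq1 Qc Q'c Qic QQi assms(15) spR]
  note zS = zero_block[OF Sc mm2 mm1 nn d2 d1 eq2 Qic Qi'c Qc QiQ assms(16) spS]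
  have R11c: "R11 \<in> carrier_mat m2 m1" and R12c: "R12 \<in> carrier_mat m2 (m - m1)"
    and R22c: "R22 \<in> carrier_mat (m - m2) (m - m1)" and Rb: "R = four_block_mat R11 R12 (0\<^sub>m (m - m2) m1) R22"
    using zR by auto
  have S11c: "S11 \<in> carrier_mat m1 m2" and S12c: "S12 \<in> carrier_mat m1 (m - m2)"
    and S22c: "S22 \<in> carrier_mat (m - m1) (m - m2)" and Sb: "S = four_block_mat S11 S12 (0\<^sub>m (m - m1) m2) S22"
    using zS by auto
  have "R * S = four_block_mat (R11 * S11 + R12 * 0\<^sub>m (m - m1) m2) (R11 * S12 + R12 * S22)
     (0\<^sub>m (m - m2) m1 * S11 + R22 * 0\<^sub>m (m - m1) m2) (0\<^sub>m (m - m2) m1 * S12 + R22 * S22)"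
    unfolding Rb Sb by (rule mult_four_block_mat[OF R11c R12c _ R22c S11c S12c _ S22c]) auto
  also have "\<dots> = four_block_mat (R11 * S11) (R11 * S12 + R12 * S22) (0\<^sub>m (m - m2) m2) (R22 * S22)"
    using R11c R12c R22c S11c S12c S22c by simp
  finally have "four_block_mat (R11 * S11) (R11 * S12 + R12 * S22) (0\<^sub>m (m - m2) m2) (R22 * S22)
     = four_block_mat (1\<^sub>m m2) (0\<^sub>m m2 (m - m2)) (0\<^sub>m (m - m2) m2) (1\<^sub>m (m - m2))"
    using RS mm2 by (metis four_block_one_mat le_add_diff_inverse)
  note eqRS = this
  have cRS: "R11 * S11 \<in> carrier_mat m2 m2" "R11 * S12 + R12 * S22 \<in> carrier_mat m2 (m - m2)"
    "0\<^sub>m (m - m2) m2 \<in> carrier_mat (m - m2) m2" "R22 * S22 \<in> carrier_mat (m - m2) (m - m2)"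
    "1\<^sub>m m2 \<in> carrier_mat m2 m2" "0\<^sub>m m2 (m - m2) \<in> carrier_mat m2 (m - m2)"
    "0\<^sub>m (m - m2) m2 \<in> carrier_mat (m - m2) m2" "1\<^sub>m (m - m2) \<in> carrier_mat (m - m2) (m - m2)"
    using R11c R12c R22c S11c S12c S22c by auto
  have RS1: "R11 * S11 = 1\<^sub>m m2" and RS2: "R22 * S22 = 1\<^sub>m (m - m2)"
    using four_block_eq[OF cRS eqRS] by auto
  have "S * R = four_block_mat (S11 * R11 + S12 * 0\<^sub>m (m - m2) m1) (S11 * R12 + S12 * R22)
     (0\<^sub>m (m - m1) m2 * R11 + S22 * 0\<^sub>m (m - m2) m1) (0\<^sub>m (m - m1) m2 * R12 + S22 * R22)"
    unfolding Rb Sb by (rule mult_four_block_mat[OF S11c S12c _ S22c R11c R12c _ R22c]) auto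
  also have "\<dots> = four_block_mat (S11 * R11) (S11 * R12 + S12 * R22) (0\<^sub>m (m - m1) m1) (S22 * R22)"
    using R11c R12c R22c S11c S12c S22c by simp
  finally have "four_block_mat (S11 * R11) (S11 * R12 + S12 * R22) (0\<^sub>m (m - m1) m1) (S22 * R22)
     = four_block_mat (1\<^sub>m m1) (0\<^sub>m m1 (m - m1)) (0\<^sub>m (m - m1) m1) (1\<^sub>m (m - m1))"
    using SR mm1 by (metis four_block_one_mat le_add_diff_inverse)
  note eqSR = this
  have cSR: "S11 * R11 \<in> carrier_mat m1 m1" "S11 * R12 + S12 * R22 \<in> carrier_mat m1 (m - m1)"
    "0\<^sub>m (m - m1) m1 \<in> carrier_mat (m - m1) m1" "S22 * R22 \<in> carrier_mat (m - m1) (m - m1)"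
    "1\<^sub>m m1 \<in> carrier_mat m1 m1" "0\<^sub>m m1 (m - m1) \<in> carrier_mat m1 (m - m1)"
    "0\<^sub>m (m - m1) m1 \<in> carrier_mat (m - m1) m1" "1\<^sub>m (m - m1) \<in> carrier_mat (m - m1) (m - m1)"
    using R11c R12c R22c S11c S12c S22c by auto
  have SR1: "S11 * R11 = 1\<^sub>m m1" and SR2: "S22 * R22 = 1\<^sub>m (m - m1)"
    using four_block_eq[OF cSR eqSR] by auto
  have meq: "m1 = m2" using pad_le[OF R11c S11c RS1] pad_le[OF S11c R11c SR1] by simp
  have inv1: "invertible_mat R11"
  proof -
    have "square_mat R11" using R11c meq by simp
    moreover have "inverts_mat R11 S11 \<and> inverts_mat S11 R11"
      unfolding inverts_mat_def using R11c S11c RS1 SR1 by simp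
    ultimately show ?thesis unfolding invertible_mat_def by blast
  qed
  have inv2: "invertible_mat R22"
  proof -
    have "square_mat R22" using R22c meq by simp
    moreover have "inverts_mat R22 S22 \<and> inverts_mat S22 R22"
      unfolding inverts_mat_def using R22c S22c RS2 SR2 by simp
    ultimately show ?thesis unfolding invertible_mat_def by blast
  qed
  have A2e: "\<forall>s\<le>k. A2 s = R11 * A1 s * Q" and C2e: "\<forall>s\<le>k. C2 s = R22 * C1 s * Q'"
    using conjunct2[OF conjunct2[OF conjunct2[OF conjunct2[OF zR]]]] by blast+
  have R11c': "R11 \<in> carrier_mat m1 m1" using R11c meq by simp
  have R22c': "R22 \<in> carrier_mat (m - m1) (m - m1)" using R22c meq by simp
  have mmeq: "m - m1 = m - m2" using meq by simp
  have X1: "R11 \<in> carrier_mat m1 m1 \<and> invertible_mat R11 \<and> is_perm_mat n1 Q \<and> (\<forall>s\<le>k. A2 s = R11 * A1 s * Q)"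
    using R11c' inv1 assms(12) A2e by (intro conjI)
  hence "\<exists>R P. R \<in> carrier_mat m1 m1 \<and> invertible_mat R \<and> is_perm_mat n1 P \<and> (\<forall>s\<le>k. A2 s = R * A1 s * P)"
    by (rule exI[of _ R11, OF exI[of _ Q]])
  hence "aci_equiv k m1 n1 A1 m2 n1 A2"
    unfolding aci_equiv_def by (rule conjI[OF meq conjI[OF refl]])
  moreover
  have X2: "R22 \<in> carrier_mat (m - m1) (m - m1) \<and> invertible_mat R22 \<and> is_perm_mat (n - n1) Q' \<and> (\<forall>s\<le>k. C2 s = R22 * C1 s * Q')"
    using R22c' inv2 assms(13) C2e by (intro conjI)
  hence "\<exists>R P. R \<in> carrier_mat (m - m1) (m - m1) \<and> invertible_mat R \<and> is_perm_mat (n - n1) P \<and> (\<forall>s\<le>k. C2 s = R * C1 s * P)"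
    by (rule exI[of _ R22, OF exI[of _ Q']])
  hence "aci_equiv k (m - m1) (n - n1) C1 (m - m2) (n - n1) C2"
    unfolding aci_equiv_def by (rule conjI[OF mmeq conjI[OF refl]])
  ultimately show ?thesis ..
qed
end
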